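(* Suppose there exist $\eta>0$, $\beta\in(0,1)$, $\delta>0$ such that $\int_{(1,\infty)}y^{1+\beta+\delta}\big|\pi(dy)-\frac{\eta\,dy}{\Gamma(-1-\beta)y^{2+\beta}}\big|<\infty$. Suppose also there are $\eta',\delta'>0$ and $\beta'\in(0,1)$ such that \[ \int_{(1,\infty)}y^{1+\beta'+\delta'}\Big|\pi(dy)-\frac{\eta'\,dy}{\Gamma(-1-\beta)y^{2+\beta'}}\Big|<\infty. \] Then $\eta'=\eta$ and $\beta'=\beta$.
   Context: $\pi$ is a measure on $(0,\infty)$ with $\int_{(0,\infty)}(y\wedge y^2)\pi(dy)<\infty$; $|\cdot|$ denotes the total variation of a signed measure; $\Gamma$ is the analytically continued Gamma function. *)

theory Defs
  imports "HOL-Analysis.Analysis"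
begin

text \<open>Total variation measure |M - N| of the signed measure M - N, restricted to the
  Borel subsets of S, defined as the supremum over finite measurable partitions
  (both M and N are assumed finite on S in the applications, so real-valued
  measure is used).\<close>
definition tv_measure :: "real measure \<Rightarrow> real measure \<Rightarrow> real set \<Rightarrow> real measure" where
  "tv_measure M N S = measure_of S {A. A \<subseteq> S \<and> A \<in> sets borel}
     (\<lambda>A. SUP P \<in> {P. finite P \<and> disjoint P \<and> P \<subseteq> {B. B \<in> sets borel \<and> B \<subseteq> A}}.
             (\<Sum>B\<in>P. ennreal \<bar>measure M B - measure N B\<bar>))"

definition stable_ref :: "real \<Rightarrow> real \<Rightarrow> real \<Rightarrow> real measure" where
  "stable_ref eta g b = density lborel
     (\<lambda>y. ennreal (indicator {1<..} y * (eta / (Gamma (-1 - g) * y powr (2 + b)))))"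

end

theory Submission
  imports Defs "HOL-Analysis.Analysis"
begin


definition tvf :: "real measure \<Rightarrow> real measure \<Rightarrow> real set \<Rightarrow> ennreal" where
 "tvf M N A = (SUP P \<in> {P. finite P \<and> disjoint P \<and> P \<subseteq> {B. B \<in> sets borel \<and> B \<subseteq> A}}.
      (\<Sum>B\<in>P. ennreal \<bar>measure M B - measure N B\<bar>))"

lemma tv_measure_eq: "tv_measure M N S = measure_of S {A. A \<subseteq> S \<and> A \<in> sets borel} (tvf M N)"
  unfolding tv_measure_def tvf_def by simp

lemma tvf_upper:
  assumes "finite P" "disjoint P" "P \<subseteq> {B. B \<in> sets borel \<and> B \<subseteq> A}"
  shows "(\<Sum>B\<in>P. ennreal \<bar>measure M B - measure N B\<bar>) \<le> tvf M N A"
  unfolding tvf_def by (rule SUP_upper) (use assms in auto)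

lemma tvf_single:
  assumes "A \<in> sets borel"
  shows "ennreal \<bar>measure M A - measure N A\<bar> \<le> tvf M N A"
  using tvf_upper[of "{A}" A M N] assms by (auto simp: disjoint_def)

lemma tvf_mono:
  assumes "A \<subseteq> B" shows "tvf M N A \<le> tvf M N B"
  unfolding tvf_def by (rule SUP_subset_mono) (use assms in auto)

lemma tvf_empty: "tvf M N {} = 0"
proof -
  have "tvf M N {} \<le> 0"
    unfolding tvf_def
  proof (rule SUP_least)
    fix P :: "real set set" assume "P \<in> {P. finite P \<and> disjoint P \<and> P \<subseteq> {B. B \<in> sets borel \<and> B \<subseteq> {}}}"
    then have "P \<subseteq> {{}}" by auto
    then have "(\<Sum>B\<in>P. ennreal \<bar>measure M B - measure N B\<bar>) = 0"
      by (intro sum.neutral) auto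
    then show "(\<Sum>B\<in>P. ennreal \<bar>measure M B - measure N B\<bar>) \<le> 0" by simp
  qed
  then show ?thesis by simp
qed

lemma tvf_superadd:
  assumes "A \<inter> B = {}"
  shows "tvf M N A + tvf M N B \<le> tvf M N (A \<union> B)"
proof -
  let ?I = "\<lambda>A. {P. finite P \<and> disjoint P \<and> P \<subseteq> {B. B \<in> sets borel \<and> B \<subseteq> A}}"
  let ?s = "\<lambda>P. (\<Sum>B\<in>P. ennreal \<bar>measure M B - measure N B\<bar>)"
  have ne: "{} \<in> ?I A" for A by auto
  have "tvf M N A + tvf M N B = (SUP P\<in>?I A. ?s P + tvf M N B)"
    unfolding tvf_def[of M N A] by (rule ennreal_SUP_add_left[symmetric]) (use ne in blast)
  also have "\<dots> \<le> tvf M N (A \<union> B)"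
  proof (rule SUP_least)
    fix P assume P: "P \<in> ?I A"
    have "?s P + tvf M N B = (SUP Q\<in>?I B. ?s P + ?s Q)"
      unfolding tvf_def[of M N B] by (rule ennreal_SUP_add_right) (use ne in blast)
    also have "\<dots> \<le> tvf M N (A \<union> B)"
    proof (rule SUP_least)
      fix Q assume Q: "Q \<in> ?I B"
      have "P \<inter> Q \<subseteq> {{}}" using P Q assms by blast
      then have z: "?s (P \<inter> Q) = 0" by (intro sum.neutral) auto
      have "?s P + ?s Q = ?s (P \<union> Q) + ?s (P \<inter> Q)"
        using P Q by (intro sum.union_inter[symmetric]) auto
      also have "\<dots> = ?s (P \<union> Q)" using z by simp
      also have "\<dots> \<le> tvf M N (A \<union> B)"
      proof (rule tvf_upper)
        show "finite (P \<union> Q)" using P Q by auto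
        show "P \<union> Q \<subseteq> {X. X \<in> sets borel \<and> X \<subseteq> A \<union> B}" using P Q by auto
        show "disjoint (P \<union> Q)"
          unfolding disjoint_def
        proof (intro ballI impI)
          fix X Y assume XY: "X \<in> P \<union> Q" "Y \<in> P \<union> Q" "X \<noteq> Y"
          show "X \<inter> Y = {}"
          proof (cases "X \<in> P")
            case True
            show ?thesis
            proof (cases "Y \<in> P")
              case True
              with \<open>X \<in> P\<close> XY P show ?thesis by (auto simp: disjoint_def)
            next
              case False
              with XY \<open>X \<in> P\<close> P Q assms show ?thesis by blast
            qed
          next
            case False
            then have "X \<in> Q" using XY by auto
            show ?thesis
            proof (cases "Y \<in> Q")
              case True
              with \<open>X \<in> Q\<close> XY Q show ?thesis by (auto simp: disjoint_def)
            next
              case False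
              with XY \<open>X \<in> Q\<close> P Q assms show ?thesis by blast
            qed
          qed
        qed
      qed
      finally show "?s P + ?s Q \<le> tvf M N (A \<union> B)" .
    qed
    finally show "?s P + tvf M N B \<le> tvf M N (A \<union> B)" .
  qed
  finally show ?thesis .
qed

lemma tvf_superadd_count:
  assumes "disjoint_family A"
  shows "(\<Sum>i. tvf M N (A i)) \<le> tvf M N (\<Union>i. A i)"
proof (rule suminf_le_const)
  show "summable (\<lambda>i. tvf M N (A i))" by (rule summableI)
  fix n
  have "(\<Sum>i<n. tvf M N (A i)) \<le> tvf M N (\<Union>i<n. A i)"
  proof (induction n)
    case 0 then show ?case by (simp add: tvf_empty)
  next
    case (Suc n)
    have d: "(\<Union>i<n. A i) \<inter> A n = {}"
      using assms by (auto simp: disjoint_family_on_def) (metis less_irrefl disjoint_iff)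
    have "(\<Sum>i<Suc n. tvf M N (A i)) = (\<Sum>i<n. tvf M N (A i)) + tvf M N (A n)" by simp
    also have "\<dots> \<le> tvf M N (\<Union>i<n. A i) + tvf M N (A n)" using Suc by (rule add_right_mono)
    also have "\<dots> \<le> tvf M N ((\<Union>i<n. A i) \<union> A n)" by (rule tvf_superadd[OF d])
    also have "(\<Union>i<n. A i) \<union> A n = (\<Union>i<Suc n. A i)" by (auto simp: lessThan_Suc)
    finally show ?case .
  qed
  also have "\<dots> \<le> tvf M N (\<Union>i. A i)" by (rule tvf_mono) auto
  finally show "(\<Sum>i<n. tvf M N (A i)) \<le> tvf M N (\<Union>i. A i)" .
qed



lemma sums_abs_ennreal:
  fixes x :: "nat \<Rightarrow> real"
  assumes "x sums s"
  shows "ennreal \<bar>s\<bar> \<le> (\<Sum>i. ennreal \<bar>x i\<bar>)"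
proof (cases "summable (\<lambda>i. \<bar>x i\<bar>)")
  case True
  have s: "s = suminf x" using assms by (simp add: sums_iff)
  have l: "\<bar>s\<bar> \<le> (\<Sum>i. \<bar>x i\<bar>)" unfolding s by (rule summable_rabs[OF True])
  have e: "(\<Sum>i. ennreal \<bar>x i\<bar>) = ennreal (\<Sum>i. \<bar>x i\<bar>)"
    by (rule suminf_ennreal2) (auto simp: True)
  show ?thesis unfolding e by (rule ennreal_leI[OF l])
next
  case False
  have "(\<Sum>i. ennreal \<bar>x i\<bar>) = top"
  proof (rule ccontr)
    assume "(\<Sum>i. ennreal \<bar>x i\<bar>) \<noteq> top"
    then have "summable (\<lambda>i. \<bar>x i\<bar>)" by (rule summable_suminf_not_top[OF abs_ge_zero])
    with False show False by contradiction
  qed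
  then show ?thesis by simp
qed

lemma mu_sums:
  fixes M :: "real measure"
  assumes M: "\<And>B. B \<in> sets borel \<Longrightarrow> B \<subseteq> S \<Longrightarrow> B \<in> sets M" "emeasure M S < \<infinity>"
    and S: "S \<in> sets borel"
    and B: "B \<in> sets borel" "B \<subseteq> S" and A: "\<And>i. A i \<in> sets borel" "disjoint_family A"
    and sub: "B \<subseteq> (\<Union>i. A i)"
  shows "(\<lambda>i. measure M (B \<inter> A i)) sums (measure M B)"
proof -
  have U: "(\<Union>i. B \<inter> A i) = B" using sub by blast
  have "(\<lambda>i. measure M (B \<inter> A i)) sums (measure M (\<Union>i. B \<inter> A i))"
  proof (rule measure_UNION)
    show "range (\<lambda>i. B \<inter> A i) \<subseteq> sets M"
    proof (rule image_subsetI)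
      fix i
      have "B \<inter> A i \<in> sets borel" using A(1) B(1) by (rule sets.Int[rotated])
      moreover have "B \<inter> A i \<subseteq> S" using B(2) by blast
      ultimately show "B \<inter> A i \<in> sets M" by (rule M(1))
    qed
    show "disjoint_family (\<lambda>i. B \<inter> A i)" using A(2) by (auto simp: disjoint_family_on_def)
    have "emeasure M B \<le> emeasure M S" using M B S by (intro emeasure_mono) auto
    then show "emeasure M (\<Union>i. B \<inter> A i) \<noteq> \<infinity>" using M(2) U by auto
  qed
  then show ?thesis using U by simp
qed

lemma tvf_restrict_le:
  assumes P: "finite P" "disjoint P" "P \<subseteq> {B. B \<in> sets borel \<and> B \<subseteq> X}" and C: "C \<in> sets borel"
  shows "(\<Sum>B\<in>P. ennreal \<bar>measure M (B \<inter> C) - measure N (B \<inter> C)\<bar>) \<le> tvf M N C"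
proof -
  let ?d = "\<lambda>B. ennreal \<bar>measure M B - measure N B\<bar>"
  let ?h = "\<lambda>B. B \<inter> C"
  have "sum ?d (?h ` P) = sum (?d \<circ> ?h) P"
  proof (rule sum.reindex_nontrivial)
    show "finite P" by fact
    fix x y assume "x \<in> P" "y \<in> P" "x \<noteq> y" "x \<inter> C = y \<inter> C"
    then have "x \<inter> C = {}" using P(2) by (auto simp: disjoint_def)
    then show "?d (x \<inter> C) = 0" by simp
  qed
  then have "(\<Sum>B\<in>P. ?d (B \<inter> C)) = sum ?d (?h ` P)" by (simp add: o_def)
  also have "\<dots> \<le> tvf M N C"
  proof (rule tvf_upper)
    show "finite (?h ` P)" using P by auto
    show "?h ` P \<subseteq> {B. B \<in> sets borel \<and> B \<subseteq> C}" using P C by auto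
    show "disjoint (?h ` P)" unfolding disjoint_def
    proof (intro ballI impI)
      fix X Y assume "X \<in> ?h ` P" "Y \<in> ?h ` P" "X \<noteq> Y"
      then obtain x y where "x \<in> P" "y \<in> P" "X = x \<inter> C" "Y = y \<inter> C" "x \<noteq> y" by auto
      then have "x \<inter> y = {}" using P(2) unfolding disjoint_def by blast
      then show "X \<inter> Y = {}" using \<open>X = x \<inter> C\<close> \<open>Y = y \<inter> C\<close> by blast
    qed
  qed
  finally show ?thesis .
qed

lemma tvf_subadd_count:
  fixes M N :: "real measure"
  assumes M: "\<And>B. B \<in> sets borel \<Longrightarrow> B \<subseteq> S \<Longrightarrow> B \<in> sets M" "emeasure M S < \<infinity>"
    and N: "\<And>B. B \<in> sets borel \<Longrightarrow> B \<subseteq> S \<Longrightarrow> B \<in> sets N" "emeasure N S < \<infinity>"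
    and S: "S \<in> sets borel"
    and A: "\<And>i. A i \<in> sets borel" "\<And>i. A i \<subseteq> S" "disjoint_family A"
  shows "tvf M N (\<Union>i. A i) \<le> (\<Sum>i. tvf M N (A i))"
  unfolding tvf_def[of M N "\<Union>i. A i"]
proof (rule SUP_least)
  let ?d = "\<lambda>B. ennreal \<bar>measure M B - measure N B\<bar>"
  fix P assume P: "P \<in> {P. finite P \<and> disjoint P \<and> P \<subseteq> {B. B \<in> sets borel \<and> B \<subseteq> (\<Union>i. A i)}}"
  have "(\<Sum>B\<in>P. ?d B) \<le> (\<Sum>B\<in>P. \<Sum>i. ?d (B \<inter> A i))"
  proof (rule sum_mono)
    fix B assume "B \<in> P"
    then have B: "B \<in> sets borel" "B \<subseteq> (\<Union>i. A i)" using P by auto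
    then have BS: "B \<subseteq> S" using A(2) by blast
    have "(\<lambda>i. measure M (B \<inter> A i) - measure N (B \<inter> A i)) sums (measure M B - measure N B)"
    proof (rule sums_diff)
      show "(\<lambda>i. measure M (B \<inter> A i)) sums measure M B"
        by (rule mu_sums[where S=S]) (fact M B BS A S)+
      show "(\<lambda>i. measure N (B \<inter> A i)) sums measure N B"
        by (rule mu_sums[where S=S]) (fact N B BS A S)+
    qed
    then show "?d B \<le> (\<Sum>i. ?d (B \<inter> A i))" by (rule sums_abs_ennreal)
  qed
  also have "\<dots> = (\<Sum>i. \<Sum>B\<in>P. ?d (B \<inter> A i))"
    by (rule suminf_sum[symmetric]) (rule summableI)
  also have "\<dots> \<le> (\<Sum>i. tvf M N (A i))"
  proof (rule suminf_le)
    fix i show "(\<Sum>B\<in>P. ?d (B \<inter> A i)) \<le> tvf M N (A i)"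
      using P by (intro tvf_restrict_le[where X="\<Union>i. A i"] A(1)) auto
  qed (rule summableI)+
  finally show "(\<Sum>B\<in>P. ?d B) \<le> (\<Sum>i. tvf M N (A i))" .
qed



lemma tv_measure_props:
  fixes M N :: "real measure"
  assumes M: "\<And>B. B \<in> sets borel \<Longrightarrow> B \<subseteq> S \<Longrightarrow> B \<in> sets M" "emeasure M S < \<infinity>"
    and N: "\<And>B. B \<in> sets borel \<Longrightarrow> B \<subseteq> S \<Longrightarrow> B \<in> sets N" "emeasure N S < \<infinity>"
    and S: "S \<in> sets borel"
  shows "sets (tv_measure M N S) = {A. A \<subseteq> S \<and> A \<in> sets borel}"
    and "A \<in> sets borel \<Longrightarrow> A \<subseteq> S \<Longrightarrow> emeasure (tv_measure M N S) A = tvf M N A"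
proof -
  let ?A = "{A. A \<subseteq> S \<and> A \<in> sets borel}"
  have eqs: "sets (restrict_space borel S) = ?A"
  proof -
    have "S \<inter> space borel \<in> sets borel" using S by simp
    then show ?thesis using sets_restrict_space_iff[of S borel] by blast
  qed
  have sp: "space (restrict_space borel S) = S" by (simp add: space_restrict_space)
  have sa: "sigma_algebra S ?A"
    using sets.sigma_algebra_axioms[of "restrict_space borel S"] unfolding eqs sp .
  have pos: "positive ?A (tvf M N)" unfolding positive_def by (simp add: tvf_empty)
  have ca: "countably_additive ?A (tvf M N)"
    unfolding countably_additive_def
  proof (intro allI impI)
    fix F :: "nat \<Rightarrow> real set"
    assume F: "range F \<subseteq> ?A" "disjoint_family F" "\<Union> (range F) \<in> ?A"
    show "(\<Sum>i. tvf M N (F i)) = tvf M N (\<Union> (range F))"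
    proof (rule antisym)
      show "(\<Sum>i. tvf M N (F i)) \<le> tvf M N (\<Union> (range F))"
        by (rule tvf_superadd_count) fact
      show "tvf M N (\<Union> (range F)) \<le> (\<Sum>i. tvf M N (F i))"
      proof (rule tvf_subadd_count[where S=S])
        fix i
        have "F i \<in> ?A" using F(1) by blast
        then show "F i \<in> sets borel" "F i \<subseteq> S" by auto
      qed (fact M N S F)+
    qed
  qed
  show "sets (tv_measure M N S) = ?A"
    unfolding tv_measure_eq using sigma_algebra.sets_measure_of_eq[OF sa] .
  show "A \<in> sets borel \<Longrightarrow> A \<subseteq> S \<Longrightarrow> emeasure (tv_measure M N S) A = tvf M N A"
    unfolding tv_measure_eq by (rule emeasure_measure_of_sigma[OF sa pos ca]) blast
qed



lemma norm_form:
  fixes R a d m c K :: real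
  assumes R: "R > 0" and h: "R powr (a + d) * \<bar>m - c * R powr (-a)\<bar> \<le> K"
  shows "\<bar>R powr a * m - c\<bar> \<le> K * R powr (-d)"
proof -
  have e1: "R powr a * R powr (-a) = 1" using R by (simp add: powr_minus)
  have "R powr a * \<bar>m - c * R powr (-a)\<bar> = \<bar>R powr a * (m - c * R powr (-a))\<bar>"
    by (simp add: abs_mult)
  also have "\<dots> = \<bar>R powr a * m - c * (R powr a * R powr (-a))\<bar>"
    by (simp add: algebra_simps)
  also have "\<dots> = \<bar>R powr a * m - c\<bar>" using e1 by simp
  finally have e2: "R powr a * \<bar>m - c * R powr (-a)\<bar> = \<bar>R powr a * m - c\<bar>" .
  have "R powr d * \<bar>R powr a * m - c\<bar> \<le> K"
    using h unfolding e2[symmetric] powr_add by (simp add: mult.assoc mult.commute mult.left_commute)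
  then have "\<bar>R powr a * m - c\<bar> \<le> K / R powr d" using R by (simp add: field_simps)
  then show ?thesis using R by (simp add: powr_minus divide_inverse)
qed

lemma asym_contra:
  fixes m :: "real \<Rightarrow> real" and c1 c2 b1 b2 d1 d2 K1 K2 :: real
  assumes c1: "c1 > 0" and b: "b1 < b2" and d: "d1 > 0" "d2 > 0"
    and h1: "\<And>R. R > 1 \<Longrightarrow> R powr (1 + b1 + d1) * \<bar>m R - c1 * R powr (-(1 + b1))\<bar> \<le> K1"
    and h2: "\<And>R. R > 1 \<Longrightarrow> R powr (1 + b2 + d2) * \<bar>m R - c2 * R powr (-(1 + b2))\<bar> \<le> K2"
  shows False
proof -
  let ?g = "\<lambda>R. R powr (b1 - b2) * (c2 + K2 * R powr (-d2)) + K1 * R powr (-d1)"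
  have ev: "\<forall>\<^sub>F R in at_top. c1 \<le> ?g R"
  proof (rule eventually_at_top_linorderI[of 2])
    fix R :: real assume "R \<ge> 2"
    then have R: "R > 1" by simp
    have q1: "\<bar>R powr (1 + b1) * m R - c1\<bar> \<le> K1 * R powr (-d1)"
      by (rule norm_form) (use R h1[OF R] in \<open>auto simp: add.assoc\<close>)
    have q2: "\<bar>R powr (1 + b2) * m R - c2\<bar> \<le> K2 * R powr (-d2)"
      by (rule norm_form) (use R h2[OF R] in \<open>auto simp: add.assoc\<close>)
    have sp: "R powr (1 + b1) = R powr (b1 - b2) * R powr (1 + b2)"
      using R by (simp add: add.commute flip: powr_add)
    have pos: "R powr (b1 - b2) > 0" using R by simp
    have "R powr (1 + b2) * m R \<le> c2 + K2 * R powr (-d2)" using q2 by linarith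
    then have "R powr (b1 - b2) * (R powr (1 + b2) * m R) \<le> R powr (b1 - b2) * (c2 + K2 * R powr (-d2))"
      using pos by (intro mult_left_mono) auto
    moreover have "c1 \<le> R powr (1 + b1) * m R + K1 * R powr (-d1)" using q1 by linarith
    ultimately show "c1 \<le> ?g R" unfolding sp by (simp add: mult.assoc)
  qed
  have lim: "(?g \<longlongrightarrow> 0 * (c2 + K2 * 0) + K1 * 0) at_top"
    by (intro tendsto_intros tendsto_neg_powr filterlim_ident) (use b d in auto)
  have "c1 \<le> 0 * (c2 + K2 * 0) + K1 * 0"
    by (rule tendsto_le[OF trivial_limit_at_top_linorder lim tendsto_const ev])
  then show False using c1 by simp
qed

lemma eq_const:
  fixes m :: "real \<Rightarrow> real" and c1 c2 b d1 d2 K1 K2 :: real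
  assumes d: "d1 > 0" "d2 > 0"
    and h1: "\<And>R. R > 1 \<Longrightarrow> R powr (1 + b + d1) * \<bar>m R - c1 * R powr (-(1 + b))\<bar> \<le> K1"
    and h2: "\<And>R. R > 1 \<Longrightarrow> R powr (1 + b + d2) * \<bar>m R - c2 * R powr (-(1 + b))\<bar> \<le> K2"
  shows "c1 = c2"
proof -
  let ?g = "\<lambda>R. K1 * R powr (-d1) + K2 * R powr (-d2)"
  have ev: "\<forall>\<^sub>F R in at_top. \<bar>c1 - c2\<bar> \<le> ?g R"
  proof (rule eventually_at_top_linorderI[of 2])
    fix R :: real assume "R \<ge> 2"
    then have R: "R > 1" by simp
    have q1: "\<bar>R powr (1 + b) * m R - c1\<bar> \<le> K1 * R powr (-d1)"
      by (rule norm_form) (use R h1[OF R] in \<open>auto simp: add.assoc\<close>)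
    have q2: "\<bar>R powr (1 + b) * m R - c2\<bar> \<le> K2 * R powr (-d2)"
      by (rule norm_form) (use R h2[OF R] in \<open>auto simp: add.assoc\<close>)
    show "\<bar>c1 - c2\<bar> \<le> ?g R" using q1 q2 by linarith
  qed
  have lim: "(?g \<longlongrightarrow> K1 * 0 + K2 * 0) at_top"
    by (intro tendsto_intros tendsto_neg_powr filterlim_ident) (use d in auto)
  have "\<bar>c1 - c2\<bar> \<le> K1 * 0 + K2 * 0"
    by (rule tendsto_le[OF trivial_limit_at_top_linorder lim tendsto_const ev])
  then show ?thesis by simp
qed



lemma Gamma_neg_pos:
  fixes b :: real
  assumes "0 < b" "b < 1"
  shows "Gamma (-1 - b) > 0"
proof -
  let ?g = "-1 - b"
  have ni: "x \<notin> \<int>\<^sub>\<le>\<^sub>0" if "-2 < x" "x < -1" for x :: real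
  proof
    assume "x \<in> \<int>\<^sub>\<le>\<^sub>0"
    then obtain n :: int where "x = of_int n" unfolding nonpos_Ints_def by auto
    with that have "n < -1" "n > -2" by linarith+
    then show False by linarith
  qed
  have ni2: "x \<notin> \<int>\<^sub>\<le>\<^sub>0" if "-1 < x" "x < 0" for x :: real
  proof
    assume "x \<in> \<int>\<^sub>\<le>\<^sub>0"
    then obtain n :: int where "x = of_int n" unfolding nonpos_Ints_def by auto
    with that have "n < 0" "n > -1" by linarith+
    then show False by linarith
  qed
  have g1: "Gamma (?g + 1) = ?g * Gamma ?g"
    by (rule Gamma_plus1) (rule ni, use assms in auto)
  have g2: "Gamma (?g + 1 + 1) = (?g + 1) * Gamma (?g + 1)"
    by (rule Gamma_plus1) (rule ni2, use assms in auto)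
  have "Gamma (?g + 1 + 1) > 0" using assms by (intro Gamma_real_pos) simp
  then have "(?g + 1) * (?g * Gamma ?g) > 0" using g1 g2 by simp
  moreover have "(?g + 1) * ?g > 0" using assms by (intro mult_neg_neg) auto
  ultimately show ?thesis by (metis mult.assoc zero_less_mult_pos)
qed

lemma powr_tail_nn:
  fixes R b c :: real
  assumes "R > 0" "b > 0" "c \<ge> 0"
  shows "(\<integral>\<^sup>+x. ennreal (c * x powr (-(2+b)) * indicator {R..} x) \<partial>lborel)
           = ennreal (c / (1+b) * R powr (-(1+b)))"
proof -
  have "((\<lambda>x. x powr (-(2+b))) has_integral -(R powr (-(2+b)+1)) / (-(2+b)+1)) {R..}"
    by (rule has_integral_powr_to_inf) (use assms in auto)
  moreover have "-(R powr (-(2+b)+1)) / (-(2+b)+1) = R powr (-(1+b)) / (1+b)"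
  proof -
    have e: "-(2+b)+1 = -(1+b)" by simp
    have "1 + b \<noteq> 0" using assms by simp
    show ?thesis by (simp only: e divide_minus_right minus_divide_left minus_minus)
  qed
  ultimately have "((\<lambda>x. x powr (-(2+b))) has_integral R powr (-(1+b)) / (1+b)) {R..}" by simp
  then have "((\<lambda>x. c * x powr (-(2+b))) has_integral c * (R powr (-(1+b)) / (1+b))) {R..}"
    by (rule has_integral_mult_right)
  then have "((\<lambda>x. if x \<in> {R..} then c * x powr (-(2+b)) else 0) has_integral c * (R powr (-(1+b)) / (1+b))) UNIV"
    by (simp only: has_integral_restrict_UNIV)
  then have hi: "((\<lambda>x. c * x powr (-(2+b)) * indicator {R..} x) has_integral c / (1+b) * R powr (-(1+b))) UNIV"
    by (rule has_integral_eq_rhs[OF has_integral_cong[THEN iffD1], rotated]) (auto simp: indicator_def)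
  show ?thesis
    by (rule nn_integral_has_integral_lborel[OF _ _ hi]) (use assms in auto)
qed

lemma stable_sets: "sets (stable_ref eta g b) = sets borel"
  unfolding stable_ref_def by simp

lemma stable_tail:
  assumes G: "Gamma (-1-g) > 0" and "eta > 0" "b > 0" "R > 1"
  shows "emeasure (stable_ref eta g b) {R..} = ennreal (eta / Gamma (-1-g) / (1+b) * R powr (-(1+b)))"
proof -
  have "emeasure (stable_ref eta g b) {R..} =
     (\<integral>\<^sup>+x. ennreal (indicator {1<..} x * (eta / (Gamma (-1 - g) * x powr (2 + b)))) * indicator {R..} x \<partial>lborel)"
    unfolding stable_ref_def by (rule emeasure_density) auto
  also have "\<dots> = (\<integral>\<^sup>+x. ennreal (eta / Gamma (-1-g) * x powr (-(2+b)) * indicator {R..} x) \<partial>lborel)"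
  proof (rule nn_integral_cong)
    fix x :: real
    show "ennreal (indicator {1<..} x * (eta / (Gamma (-1 - g) * x powr (2 + b)))) * indicator {R..} x =
          ennreal (eta / Gamma (-1-g) * x powr (-(2+b)) * indicator {R..} x)"
    proof (cases "x \<ge> R")
      case True
      then have "x > 1" using assms by simp
      then show ?thesis using True unfolding powr_minus by (simp add: indicator_def divide_inverse mult.assoc)
    next
      case False
      then show ?thesis by (simp add: indicator_def)
    qed
  qed
  also have "\<dots> = ennreal (eta / Gamma (-1-g) / (1+b) * R powr (-(1+b)))"
    by (rule powr_tail_nn) (use assms in auto)
  finally show ?thesis .
qed

lemma stable_fin:
  assumes G: "Gamma (-1-g) > 0" and "eta > 0" "b > 0"
  shows "emeasure (stable_ref eta g b) {1<..} < \<infinity>"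
proof -
  have "emeasure (stable_ref eta g b) {1<..} =
     (\<integral>\<^sup>+x. ennreal (indicator {1<..} x * (eta / (Gamma (-1 - g) * x powr (2 + b)))) * indicator {1<..} x \<partial>lborel)"
    unfolding stable_ref_def by (rule emeasure_density) auto
  also have "\<dots> \<le> (\<integral>\<^sup>+x. ennreal (eta / Gamma (-1-g) * x powr (-(2+b)) * indicator {1..} x) \<partial>lborel)"
  proof (rule nn_integral_mono)
    fix x :: real
    show "ennreal (indicator {1<..} x * (eta / (Gamma (-1 - g) * x powr (2 + b)))) * indicator {1<..} x \<le>
          ennreal (eta / Gamma (-1-g) * x powr (-(2+b)) * indicator {1..} x)"
    proof (cases "x > 1")
      case True
      then show ?thesis unfolding powr_minus by (simp add: indicator_def divide_inverse mult.assoc)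
    next
      case False
      then show ?thesis by (simp add: indicator_def)
    qed
  qed
  also have "\<dots> = ennreal (eta / Gamma (-1-g) / (1+b) * 1 powr (-(1+b)))"
    by (rule powr_tail_nn) (use assms in auto)
  finally have le: "emeasure (stable_ref eta g b) {1<..} \<le> ennreal (eta / Gamma (-1-g) / (1+b) * 1 powr (-(1+b)))" .
  have lt: "ennreal (eta / Gamma (-1-g) / (1+b) * 1 powr (-(1+b))) < \<infinity>" by simp
  from le lt show ?thesis by (rule le_less_trans)
qed



lemma tail_bound:
  fixes \<pi> N :: "real measure" and p :: real
  assumes sets_pi: "sets \<pi> = sets (restrict_space borel {0<..})"
    and pifin: "emeasure \<pi> {1<..} < \<infinity>"
    and Nsets: "sets N = sets borel" and Nfin: "emeasure N {1<..} < \<infinity>"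
    and p: "p \<ge> 0"
    and I: "(\<integral>\<^sup>+ y. ennreal (y powr p) \<partial>(tv_measure \<pi> N {1<..})) < \<infinity>"
  shows "\<exists>K. \<forall>R>1. R powr p * \<bar>measure \<pi> {R..} - measure N {R..}\<bar> \<le> K"
proof -
  let ?nu = "tv_measure \<pi> N {1<..}"
  have piS: "B \<in> sets \<pi>" if "B \<in> sets borel" "B \<subseteq> {1<..}" for B :: "real set"
  proof -
    have o: "{0<..} \<inter> space borel \<in> sets (borel :: real measure)" by simp
    have "B \<subseteq> {0<..}" using that(2) by auto
    then show ?thesis unfolding sets_pi by (subst sets_restrict_space_iff[OF o]) (use that(1) in simp)
  qed
  have NS: "B \<in> sets N" if "B \<in> sets borel" "B \<subseteq> {1<..}" for B :: "real set"
    unfolding Nsets using that(1) .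
  have Sb: "{1<..} \<in> sets (borel :: real measure)" by simp
  have props1: "sets ?nu = {A. A \<subseteq> {1<..} \<and> A \<in> sets borel}"
  proof (rule tv_measure_props(1))
    show "\<And>B. B \<in> sets borel \<Longrightarrow> B \<subseteq> {1<..} \<Longrightarrow> B \<in> sets \<pi>" by (rule piS)
    show "\<And>B. B \<in> sets borel \<Longrightarrow> B \<subseteq> {1<..} \<Longrightarrow> B \<in> sets N" by (rule NS)
  qed (fact pifin Nfin Sb)+
  have props2: "emeasure ?nu A = tvf \<pi> N A" if "A \<in> sets borel" "A \<subseteq> {1<..}" for A
  proof (rule tv_measure_props(2))
    show "\<And>B. B \<in> sets borel \<Longrightarrow> B \<subseteq> {1<..} \<Longrightarrow> B \<in> sets \<pi>" by (rule piS)
    show "\<And>B. B \<in> sets borel \<Longrightarrow> B \<subseteq> {1<..} \<Longrightarrow> B \<in> sets N" by (rule NS)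
  qed (fact pifin Nfin Sb that)+
  have "(\<integral>\<^sup>+ y. ennreal (y powr p) \<partial>?nu) < top" using I by simp
  then have "\<exists>r\<ge>0. (\<integral>\<^sup>+ y. ennreal (y powr p) \<partial>?nu) = ennreal r" by (rule less_top_ennreal[THEN iffD1])
  then obtain K where K: "K \<ge> 0" "(\<integral>\<^sup>+ y. ennreal (y powr p) \<partial>?nu) = ennreal K" by blast
  show ?thesis
  proof (intro exI allI impI)
    fix R :: real assume R: "R > 1"
    have Rb: "{R..} \<in> sets (borel :: real measure)" by simp
    have Rs: "{R..} \<subseteq> {1<..}" using R by auto
    have mem: "{R..} \<in> sets ?nu" using Rb Rs by (simp add: props1)
    have e: "emeasure ?nu {R..} = tvf \<pi> N {R..}" by (rule props2[OF Rb Rs])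
    have s: "ennreal \<bar>measure \<pi> {R..} - measure N {R..}\<bar> \<le> emeasure ?nu {R..}"
      unfolding e by (rule tvf_single[OF Rb])
    have "ennreal (R powr p) * emeasure ?nu {R..} = (\<integral>\<^sup>+ y. ennreal (R powr p) * indicator {R..} y \<partial>?nu)"
      by (rule nn_integral_cmult_indicator[OF mem, symmetric])
    also have "\<dots> \<le> (\<integral>\<^sup>+ y. ennreal (y powr p) \<partial>?nu)"
    proof (rule nn_integral_mono)
      fix y :: real
      show "ennreal (R powr p) * indicator {R..} y \<le> ennreal (y powr p)"
      proof (cases "y \<ge> R")
        case True
        have "R powr p \<le> y powr p" by (rule powr_mono2) (use p R True in auto)
        then show ?thesis using True by (simp add: indicator_def)
      next
        case False
        then show ?thesis by (simp add: indicator_def)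
      qed
    qed
    finally have m: "ennreal (R powr p) * emeasure ?nu {R..} \<le> ennreal K" unfolding K(2) .
    have "ennreal (R powr p * \<bar>measure \<pi> {R..} - measure N {R..}\<bar>)
        = ennreal (R powr p) * ennreal \<bar>measure \<pi> {R..} - measure N {R..}\<bar>"
      by (rule ennreal_mult) auto
    also have "\<dots> \<le> ennreal (R powr p) * emeasure ?nu {R..}" by (rule mult_left_mono[OF s]) simp
    also note m
    finally show "R powr p * \<bar>measure \<pi> {R..} - measure N {R..}\<bar> \<le> K" using K(1) by simp
  qed
qed

theorem lemma2p2:
  fixes \<pi> :: "real measure"
    and \<eta> \<beta> \<delta> \<eta>' \<beta>' \<delta>' :: real
  assumes sets_pi: "sets \<pi> = sets (restrict_space borel {0<..})"
    and pi_int: "(\<integral>\<^sup>+ y. ennreal (min y (y\<^sup>2)) \<partial>\<pi>) < \<infinity>"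
    and "\<eta> > 0" and "0 < \<beta>" and "\<beta> < 1" and "\<delta> > 0"
    and H1: "(\<integral>\<^sup>+ y. ennreal (y powr (1 + \<beta> + \<delta>))
               \<partial>(tv_measure \<pi> (stable_ref \<eta> \<beta> \<beta>) {1<..})) < \<infinity>"
    and "\<eta>' > 0" and "0 < \<beta>'" and "\<beta>' < 1" and "\<delta>' > 0"
    and H2: "(\<integral>\<^sup>+ y. ennreal (y powr (1 + \<beta>' + \<delta>'))
               \<partial>(tv_measure \<pi> (stable_ref \<eta>' \<beta> \<beta>') {1<..})) < \<infinity>"
  shows "\<eta>' = \<eta> \<and> \<beta>' = \<beta>"
proof -
  note a = assms
  define G where "G = Gamma (-1 - \<beta>)"
  have G: "Gamma (-1 - \<beta>) > 0" by (rule Gamma_neg_pos) (use a in auto)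
  have mem1: "{1<..} \<in> sets \<pi>"
  proof -
    have o: "{0<..} \<inter> space borel \<in> sets (borel :: real measure)" by simp
    have "{1<..} \<subseteq> ({0<..} :: real set)" by auto
    then show ?thesis unfolding sets_pi using sets_restrict_space_iff[OF o, of "{1<..}"] by simp
  qed
  have pifin: "emeasure \<pi> {1<..} < \<infinity>"
  proof -
    have "emeasure \<pi> {1<..} = (\<integral>\<^sup>+ y. indicator {1<..} y \<partial>\<pi>)"
      by (rule nn_integral_indicator[OF mem1, symmetric])
    also have "\<dots> \<le> (\<integral>\<^sup>+ y. ennreal (min y (y\<^sup>2)) \<partial>\<pi>)"
    proof (rule nn_integral_mono)
      fix y :: real
      show "indicator {1<..} y \<le> ennreal (min y (y\<^sup>2))"
      proof (cases "y > 1")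
        case True
        have "1 * y \<le> y * y" using True by (intro mult_right_mono) auto
        then have "1 \<le> min y (y\<^sup>2)" using True by (simp add: power2_eq_square)
        then show ?thesis using True by (simp add: indicator_def)
      next
        case False
        then show ?thesis by (simp add: indicator_def)
      qed
    qed
    finally show ?thesis using pi_int by (rule le_less_trans)
  qed
  define c1 where "c1 = \<eta> / Gamma (-1 - \<beta>) / (1 + \<beta>)"
  define c2 where "c2 = \<eta>' / Gamma (-1 - \<beta>) / (1 + \<beta>')"
  have c1: "c1 > 0" unfolding c1_def using G a by simp
  have c2: "c2 > 0" unfolding c2_def using G a by simp
  obtain K1 where K1: "\<And>R. R > 1 \<Longrightarrow> R powr (1 + \<beta> + \<delta>) *
        \<bar>measure \<pi> {R..} - measure (stable_ref \<eta> \<beta> \<beta>) {R..}\<bar> \<le> K1"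
  proof -
    have f: "emeasure (stable_ref \<eta> \<beta> \<beta>) {1<..} < \<infinity>" by (rule stable_fin[OF G]) (use a in auto)
    have p: "1 + \<beta> + \<delta> \<ge> 0" using a by simp
    from tail_bound[OF sets_pi pifin stable_sets f p H1] show ?thesis using that by blast
  qed
  obtain K2 where K2: "\<And>R. R > 1 \<Longrightarrow> R powr (1 + \<beta>' + \<delta>') *
        \<bar>measure \<pi> {R..} - measure (stable_ref \<eta>' \<beta> \<beta>') {R..}\<bar> \<le> K2"
  proof -
    have f: "emeasure (stable_ref \<eta>' \<beta> \<beta>') {1<..} < \<infinity>" by (rule stable_fin[OF G]) (use a in auto)
    have p: "1 + \<beta>' + \<delta>' \<ge> 0" using a by simp
    from tail_bound[OF sets_pi pifin stable_sets f p H2] show ?thesis using that by blast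
  qed
  have m1: "measure (stable_ref \<eta> \<beta> \<beta>) {R..} = c1 * R powr (-(1 + \<beta>))" if "R > 1" for R
  proof -
    have "emeasure (stable_ref \<eta> \<beta> \<beta>) {R..} = ennreal (\<eta> / Gamma (-1-\<beta>) / (1+\<beta>) * R powr (-(1+\<beta>)))"
      by (rule stable_tail[OF G]) (use a that in auto)
    moreover have "0 \<le> \<eta> / Gamma (-1-\<beta>) / (1+\<beta>) * R powr (-(1+\<beta>))" using G a by simp
    ultimately show ?thesis unfolding c1_def by (intro measure_eq_emeasure_eq_ennreal)
  qed
  have m2: "measure (stable_ref \<eta>' \<beta> \<beta>') {R..} = c2 * R powr (-(1 + \<beta>'))" if "R > 1" for R
  proof -
    have "emeasure (stable_ref \<eta>' \<beta> \<beta>') {R..} = ennreal (\<eta>' / Gamma (-1-\<beta>) / (1+\<beta>') * R powr (-(1+\<beta>')))"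
      by (rule stable_tail[OF G]) (use a that in auto)
    moreover have "0 \<le> \<eta>' / Gamma (-1-\<beta>) / (1+\<beta>') * R powr (-(1+\<beta>'))" using G a by simp
    ultimately show ?thesis unfolding c2_def by (intro measure_eq_emeasure_eq_ennreal)
  qed
  have h1: "R powr (1 + \<beta> + \<delta>) * \<bar>measure \<pi> {R..} - c1 * R powr (-(1 + \<beta>))\<bar> \<le> K1" if "R > 1" for R
    using K1[OF that] m1[OF that] by simp
  have h2: "R powr (1 + \<beta>' + \<delta>') * \<bar>measure \<pi> {R..} - c2 * R powr (-(1 + \<beta>'))\<bar> \<le> K2" if "R > 1" for R
    using K2[OF that] m2[OF that] by simp
  have bb: "\<beta>' = \<beta>"
  proof (rule linorder_cases[of \<beta> \<beta>'])
    assume "\<beta> < \<beta>'"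
    from asym_contra[OF c1 this _ _ h1 h2] a show ?thesis by auto
  next
    assume "\<beta>' < \<beta>"
    from asym_contra[OF c2 this _ _ h2 h1] a show ?thesis by auto
  qed auto
  have h2': "R powr (1 + \<beta> + \<delta>') * \<bar>measure \<pi> {R..} - c2 * R powr (-(1 + \<beta>))\<bar> \<le> K2" if "R > 1" for R
    using h2[OF that] bb by simp
  have "c1 = c2" by (rule eq_const[OF _ _ h1 h2']) (use a in auto)
  then have "\<eta> / Gamma (-1 - \<beta>) / (1 + \<beta>) = \<eta>' / Gamma (-1 - \<beta>) / (1 + \<beta>)"
    unfolding c1_def c2_def using bb by simp
  moreover have ne1: "1 + \<beta> \<noteq> 0" using a by simp
  moreover have ne2: "Gamma (-1 - \<beta>) \<noteq> 0" using G by simp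
  ultimately have "\<eta> = \<eta>'" by (metis divide_cancel_right)
  with bb show ?thesis by simp
qed


end
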